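(* Let $m\ge2$, let $P_1,\dots,P_m$ be $n\times n$ orthogonal projection matrices, and let $M$ be the $mn\times mn$ block matrix (blocks of size $n\times n$, indexed by $i,j\in\{1,\dots,m\}$) with diagonal blocks $M_{ii}=I-\tfrac12P_i$, blocks $M_{i,i-1}=\tfrac12P_i$ (where index $0$ means $m$), and all other blocks zero; i.e. $M$ is the matrix of the map $(x_1,\dots,x_m)\mapsto\big(x_i-\tfrac12P_i(x_i-x_{i-1})\big)_{i=1}^m$ with $x_0:=x_m$. Then every eigenvalue $\lambda\ne1$ of $M$ satisfies $|\lambda|<1$.
   Context: An orthogonal projection matrix is a real symmetric matrix $P$ with $P^2=P$. *)

theory Defs
  imports Complex_Main "Jordan_Normal_Form.Char_Poly"
begin

definition orth_proj_mat :: "nat \<Rightarrow> real mat \<Rightarrow> bool" where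
  "orth_proj_mat n P \<longleftrightarrow> P \<in> carrier_mat n n \<and> transpose_mat P = P \<and> P * P = P"

text \<open>The (m n) x (m n) block matrix with blocks indexed by i, j in {0..m-1} (0-based):
  diagonal blocks I - P_i / 2, blocks (i, i-1 mod m) equal to P_i / 2, all others zero.\<close>
definition cyc_block_mat :: "nat \<Rightarrow> nat \<Rightarrow> (nat \<Rightarrow> real mat) \<Rightarrow> real mat" where
  "cyc_block_mat m n P = mat (m * n) (m * n) (\<lambda>(r, c).
     (let i = r div n; a = r mod n; j = c div n; b = c mod n in
      if j = i then (if a = b then 1 else 0) - (1/2) * (P i $$ (a, b))
      else if j = (i + m - 1) mod m then (1/2) * (P i $$ (a, b))
      else 0))"

end

theory Submission
  imports Defs
begin


lemma projE:
  assumes "orth_proj_mat n Q" "a < n" "b < n"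
  shows "Q $$ (a,b) = Q $$ (b,a)" "(\<Sum>c<n. Q $$ (a,c) * Q $$ (c,b)) = Q $$ (a,b)"
proof -
  have C: "Q \<in> carrier_mat n n" "transpose_mat Q = Q" "Q * Q = Q" using assms(1) unfolding orth_proj_mat_def by auto
  have "Q $$ (a,b) = transpose_mat Q $$ (a,b)" using C(2) by simp
  also have "\<dots> = Q $$ (b,a)" using C(1) assms by auto
  finally show "Q $$ (a,b) = Q $$ (b,a)" .
  have "(Q*Q) $$ (a,b) = (\<Sum>c<n. Q $$ (a,c) * Q $$ (c,b))"
    using C(1) assms by (simp add: scalar_prod_def atLeast0LessThan)
  thus "(\<Sum>c<n. Q $$ (a,c) * Q $$ (c,b)) = Q $$ (a,b)" using C(3) by simp
qed

definition appr :: "nat \<Rightarrow> real mat \<Rightarrow> (nat \<Rightarrow> real) \<Rightarrow> nat \<Rightarrow> real" where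
  "appr n Q u a = (\<Sum>b<n. Q $$ (a,b) * u b)"

lemma appr_idem: assumes "orth_proj_mat n Q" "a < n"
  shows "appr n Q (appr n Q u) a = appr n Q u a"
proof -
  have "appr n Q (appr n Q u) a = (\<Sum>b<n. \<Sum>c<n. Q $$ (a,b) * (Q $$ (b,c) * u c))"
    unfolding appr_def by (simp add: sum_distrib_left)
  also have "\<dots> = (\<Sum>c<n. (\<Sum>b<n. Q $$ (a,b) * Q $$ (b,c)) * u c)"
    by (subst sum.swap) (simp add: sum_distrib_right mult.assoc)
  also have "\<dots> = appr n Q u a" unfolding appr_def
    using projE(2)[OF assms(1) assms(2)] by simp
  finally show ?thesis .
qed

lemma appr_norm: assumes "orth_proj_mat n Q"
  shows "(\<Sum>a<n. (appr n Q u a)^2) \<le> (\<Sum>a<n. (u a)^2)"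
proof -
  let ?w = "appr n Q u"
  have "(\<Sum>a<n. ?w a * ?w a) = (\<Sum>a<n. \<Sum>b<n. Q $$ (a,b) * u b * ?w a)"
    by (simp add: appr_def sum_distrib_right)
  also have "\<dots> = (\<Sum>b<n. u b * (\<Sum>a<n. Q $$ (b,a) * ?w a))"
    apply (subst sum.swap) apply (simp add: sum_distrib_left)
    apply (rule sum.cong, simp) apply (rule sum.cong, simp)
    using projE(1)[OF assms] by simp
  also have "\<dots> = (\<Sum>b<n. u b * ?w b)"
    using appr_idem[OF assms] by (simp add: appr_def[symmetric])
  finally have E: "(\<Sum>a<n. ?w a * ?w a) = (\<Sum>b<n. u b * ?w b)" .
  have "0 \<le> (\<Sum>a<n. (u a - ?w a)^2)" by (simp add: sum_nonneg)
  also have "\<dots> = (\<Sum>a<n. (u a)^2) - 2 * (\<Sum>b<n. u b * ?w b) + (\<Sum>a<n. ?w a * ?w a)"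
    by (simp add: power2_eq_square algebra_simps sum.distrib sum_subtractf sum_distrib_left)
  finally show ?thesis using E by (simp add: power2_eq_square)
qed


definition app :: "nat \<Rightarrow> real mat \<Rightarrow> (nat \<Rightarrow> complex) \<Rightarrow> nat \<Rightarrow> complex" where
  "app n Q z a = (\<Sum>b<n. complex_of_real (Q $$ (a,b)) * z b)"

lemma app_cong: "(\<And>b. b < n \<Longrightarrow> z b = w b) \<Longrightarrow> app n Q z a = app n Q w a"
  unfolding app_def by (rule sum.cong) auto

lemma app_scale: "app n Q (\<lambda>b. c * z b) a = c * app n Q z a"
  unfolding app_def by (simp add: sum_distrib_left algebra_simps)

lemma app_diff: "app n Q (\<lambda>b. z b - w b) a = app n Q z a - app n Q w a"
  unfolding app_def by (simp add: sum_subtractf algebra_simps)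

lemma Re_app: "Re (app n Q z a) = appr n Q (\<lambda>b. Re (z b)) a"
  unfolding app_def appr_def by (simp add: Re_sum)

lemma Im_app: "Im (app n Q z a) = appr n Q (\<lambda>b. Im (z b)) a"
  unfolding app_def appr_def by (simp add: Im_sum)

lemma app_idem: assumes "orth_proj_mat n Q" "a < n"
  shows "app n Q (app n Q z) a = app n Q z a"
proof (rule complex_eqI)
  have "appr n Q (\<lambda>b. Re (app n Q z b)) a = appr n Q (appr n Q (\<lambda>b. Re (z b))) a"
    by (simp add: Re_app)
  then show "Re (app n Q (app n Q z) a) = Re (app n Q z a)"
    using appr_idem[OF assms] by (simp add: Re_app)
  have "appr n Q (\<lambda>b. Im (app n Q z b)) a = appr n Q (appr n Q (\<lambda>b. Im (z b))) a"
    by (simp add: Im_app)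
  then show "Im (app n Q (app n Q z) a) = Im (app n Q z a)"
    using appr_idem[OF assms] by (simp add: Im_app)
qed

lemma cmod_sq: "(cmod z)^2 = (Re z)^2 + (Im z)^2"
  by (simp add: cmod_def)

lemma app_norm: assumes "orth_proj_mat n Q"
  shows "(\<Sum>a<n. (cmod (app n Q z a))^2) \<le> (\<Sum>a<n. (cmod (z a))^2)"
proof -
  have "(\<Sum>a<n. (cmod (app n Q z a))^2) = (\<Sum>a<n. (appr n Q (\<lambda>b. Re (z b)) a)^2) + (\<Sum>a<n. (appr n Q (\<lambda>b. Im (z b)) a)^2)"
    by (simp add: cmod_sq Re_app Im_app sum.distrib)
  also have "\<dots> \<le> (\<Sum>a<n. (Re (z a))^2) + (\<Sum>a<n. (Im (z a))^2)"
    using appr_norm[OF assms] by (intro add_mono) auto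
  also have "\<dots> = (\<Sum>a<n. (cmod (z a))^2)" by (simp add: cmod_sq sum.distrib)
  finally show ?thesis .
qed

lemma pr_eq: assumes "(m::nat) \<ge> 2" "i < m"
  shows "(i + m - 1) mod m = (if i = 0 then m - 1 else i - 1)"
  proof (cases "i = 0")
    case True then show ?thesis using assms by simp
  next
    case False
    then have e: "i + m - 1 = (i - 1) + m" by simp
    have "((i - 1) + m) mod m = i - 1" using assms(2) by simp
    then show ?thesis using False e by metis
  qed

lemma pr_bij: assumes "(m::nat) \<ge> 2"
  shows "bij_betw (\<lambda>i. (i + m - 1) mod m) {..<m} {..<m}"
proof -
  note pr = pr_eq[OF assms]
  show ?thesis
  proof (rule bij_betwI[where g = "\<lambda>i. if i = m - 1 then 0 else i + 1"])
    show "(\<lambda>i. (i + m - 1) mod m) \<in> {..<m} \<rightarrow> {..<m}" using assms by auto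
    show "(\<lambda>i. if i = m - 1 then 0 else i + 1) \<in> {..<m} \<rightarrow> {..<m}" using assms by auto
    show "(if (x + m - 1) mod m = m - 1 then 0 else (x + m - 1) mod m + 1) = x" if "x \<in> {..<m}" for x
      using that pr[of x] assms by auto
    show "((if y = m - 1 then 0 else y + 1) + m - 1) mod m = y" if "y \<in> {..<m}" for y
      using that pr assms by auto
  qed
qed

lemma abstract_main:
  fixes x :: "nat \<Rightarrow> nat \<Rightarrow> complex" and lam :: complex
  assumes m: "m \<ge> 2"
    and proj: "\<And>i. i < m \<Longrightarrow> orth_proj_mat n (P i)"
    and E: "\<And>i a. i < m \<Longrightarrow> a < n \<Longrightarrow>
       lam * x i a = x i a - (1/2) * app n (P i) (x i) a + (1/2) * app n (P i) (x ((i + m - 1) mod m)) a"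
    and nz: "i0 < m" "a0 < n" "x i0 a0 \<noteq> 0"
    and l1: "lam \<noteq> 1"
  shows "cmod lam < 1"
proof -
  define pr where "pr i = (i + m - 1) mod m" for i
  have prm: "pr i < m" for i using m by (simp add: pr_def)
  define N where "N i = (\<Sum>a<n. (cmod (x i a))^2)" for i
  define K where "K = (cmod (1 - 2*lam))^2"
  have step1: "app n (P i) (x i) a = x i a" if i: "i < m" and a: "a < n" for i a
  proof -
    define d where "d b = x i b - x (pr i) b" for b
    define c where "c = 1 / (2 * (1 - lam))"
    have xd: "x i b = c * app n (P i) d b" if "b < n" for b
    proof -
      have h0: "lam * x i b = x i b - (1/2) * app n (P i) (x i) b + (1/2) * app n (P i) (x (pr i)) b"
        using E[OF i that] unfolding pr_def .
      have "(1 - lam) * x i b = (1/2) * app n (P i) d b"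
        unfolding d_def app_diff left_diff_distrib h0 by (simp add: algebra_simps)
      then show ?thesis using l1 unfolding c_def by (simp add: field_simps)
    qed
    have "app n (P i) (x i) a = app n (P i) (\<lambda>b. c * app n (P i) d b) a"
      by (rule app_cong) (simp add: xd)
    also have "\<dots> = c * app n (P i) d a" by (simp add: app_scale app_idem[OF proj[OF i] a])
    also have "\<dots> = x i a" using xd[OF a] by simp
    finally show ?thesis .
  qed
  have step2: "(1 - 2*lam) * x i a = - app n (P i) (x (pr i)) a" if i: "i < m" and a: "a < n" for i a
  proof -
    have h0: "lam * x i a = x i a - (1/2) * x i a + (1/2) * app n (P i) (x (pr i)) a"
      using E[OF i a] unfolding step1[OF i a] pr_def .
    have "(1 - 2*lam) * x i a = x i a - 2 * (lam * x i a)" by (simp add: algebra_simps)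
    also have "\<dots> = - app n (P i) (x (pr i)) a" unfolding h0 by (simp add: algebra_simps)
    finally show ?thesis .
  qed
  have step3: "K * N i \<le> N (pr i)" if i: "i < m" for i
  proof -
    have "K * N i = (\<Sum>a<n. (cmod (app n (P i) (x (pr i)) a))^2)"
      unfolding K_def N_def sum_distrib_left
    proof (rule sum.cong)
      fix a assume "a \<in> {..<n}"
      then have "cmod ((1 - 2*lam) * x i a) = cmod (app n (P i) (x (pr i)) a)"
        using step2[OF i] by simp
      then show "(cmod (1 - 2 * lam))\<^sup>2 * (cmod (x i a))\<^sup>2 = (cmod (app n (P i) (x (pr i)) a))\<^sup>2"
        unfolding power_mult_distrib[symmetric] norm_mult[symmetric] by simp
    qed simp
    also have "\<dots> \<le> N (pr i)" unfolding N_def by (rule app_norm[OF proj[OF i]])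
    finally show ?thesis .
  qed
  have "K * (\<Sum>i<m. N i) \<le> (\<Sum>i<m. N (pr i))"
    unfolding sum_distrib_left by (rule sum_mono) (simp add: step3)
  also have "(\<Sum>i<m. N (pr i)) = (\<Sum>i<m. N i)"
    using sum.reindex_bij_betw[OF pr_bij[OF m], of N] unfolding pr_def by simp
  finally have KS: "K * (\<Sum>i<m. N i) \<le> (\<Sum>i<m. N i)" .
  have "0 < N i0"
    unfolding N_def using nz by (intro sum_pos2[of _ a0]) auto
  moreover have "N i0 \<le> (\<Sum>i<m. N i)"
    using nz(1) by (intro member_le_sum) (auto simp: N_def sum_nonneg)
  ultimately have "0 < (\<Sum>i<m. N i)" by simp
  with KS have "K \<le> 1" by simp
  then have "(1 - 2 * Re lam)^2 + (2 * Im lam)^2 \<le> 1"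
    unfolding K_def cmod_sq by simp
  moreover have "Re lam \<noteq> 1 \<or> Im lam \<noteq> 0" using l1 complex_eqI by force
  ultimately have "(Re lam)^2 + (Im lam)^2 < 1"
  proof -
    assume A: "(1 - 2 * Re lam)^2 + (2 * Im lam)^2 \<le> 1" and B: "Re lam \<noteq> 1 \<or> Im lam \<noteq> 0"
    have C: "(Re lam)^2 + (Im lam)^2 \<le> Re lam" using A by (simp add: power2_eq_square algebra_simps)
    show ?thesis
    proof (rule ccontr)
      assume "\<not> ?thesis"
      then have D: "1 \<le> Re lam" using C by simp
      have "(Re lam)^2 \<le> Re lam" using C zero_le_power2[of "Im lam"] by linarith
      then have "Re lam * Re lam \<le> 1 * Re lam" by (simp add: power2_eq_square)
      then have "Re lam \<le> 1" using D by (simp add: mult_le_cancel_right)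
      with D have r: "Re lam = 1" by simp
      with C have "(Im lam)^2 \<le> 0" by simp
      then have "Im lam = 0" by simp
      with r B show False by simp
    qed
  qed
  then show ?thesis by (simp add: cmod_def)
qed


lemma reindex_blocks: fixes f :: "nat \<Rightarrow> 'a::comm_monoid_add" shows "(\<Sum>c<m*n. f c) = (\<Sum>j<m. \<Sum>b<n. f (j*n+b))"
proof -
  have "(\<Sum>c<m*n. f c) = (\<Sum>j<m. sum f {j*n..<j*n+n})"
    using sum.nat_group[of f n m] by simp
  also have "\<dots> = (\<Sum>j<m. \<Sum>b<n. f (j*n+b))"
  proof (rule sum.cong)
    fix j
    show "sum f {j*n..<j*n+n} = (\<Sum>b<n. f (j*n+b))"
      using sum.shift_bounds_nat_ivl[of f 0 "j*n" n]
      by (simp add: atLeast0LessThan add.commute)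
  qed simp
  finally show ?thesis .
qed

theorem lemma10:
  fixes m n :: nat and P :: "nat \<Rightarrow> real mat" and lam :: complex
  assumes "m \<ge> 2"
    and "\<And>i. i < m \<Longrightarrow> orth_proj_mat n (P i)"
    and "eigenvalue (map_mat complex_of_real (cyc_block_mat m n P)) lam"
    and "lam \<noteq> 1"
  shows "cmod lam < 1"
proof -
  define M where "M = cyc_block_mat m n P"
  define Mc where "Mc = map_mat complex_of_real M"
  have dimM: "dim_row Mc = m*n" "dim_col Mc = m*n" unfolding Mc_def M_def cyc_block_mat_def by auto
  obtain v where v: "v \<in> carrier_vec (m*n)" "v \<noteq> 0\<^sub>v (m*n)" "Mc *\<^sub>v v = lam \<cdot>\<^sub>v v"
  proof -
    have "eigenvalue Mc lam" using assms(3) by (simp add: Mc_def M_def)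
    then show ?thesis using that unfolding eigenvalue_def eigenvector_def dimM by auto
  qed
  obtain r where r: "r < m*n" "v $ r \<noteq> 0"
  proof (rule ccontr)
    assume "\<not> thesis"
    then have "\<And>r. r < m*n \<Longrightarrow> v $ r = 0" using that by blast
    then have "v = 0\<^sub>v (m*n)" using v(1) by (intro eq_vecI) auto
    with v(2) show False by simp
  qed
  then have npos: "n > 0" by (cases n) auto
  define x where "x i b = v $ (i*n+b)" for i b
  define pr where "pr i = (i + m - 1) mod m" for i
  have dm: "(j*n+b) div n = j" "(j*n+b) mod n = b" if "b < n" for j b
    using that npos by auto
  have E: "lam * x i a = x i a - (1/2) * app n (P i) (x i) a + (1/2) * app n (P i) (x (pr i)) a"
    if i: "i < m" and a: "a < n" for i a
  proof -
    have "i*n + a < (i+1)*n" using a by simp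
    also have "\<dots> \<le> m*n" using i by (intro mult_right_mono) auto
    finally have rlt: "i*n+a < m*n" .
    have ipr: "pr i \<noteq> i" "pr i < m" using assms(1) i pr_eq[OF assms(1) i] unfolding pr_def
      by auto
    have "lam * v $ (i*n+a) = (Mc *\<^sub>v v) $ (i*n+a)" using v(3) v(1) rlt by simp
    also have "\<dots> = (\<Sum>c<m*n. Mc $$ (i*n+a, c) * v $ c)"
      using rlt v(1) dimM by (simp add: scalar_prod_def atLeast0LessThan)
    also have "\<dots> = (\<Sum>j<m. \<Sum>b<n. Mc $$ (i*n+a, j*n+b) * x j b)"
      unfolding reindex_blocks x_def ..
    also have "\<dots> = (\<Sum>j<m. (if j = i then x i a - (1/2) * app n (P i) (x i) a else 0)
                        + (if j = pr i then (1/2) * app n (P i) (x (pr i)) a else 0))"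
    proof (rule sum.cong)
      fix j assume "j \<in> {..<m}"
      then have j: "j < m" by simp
      have ent: "Mc $$ (i*n+a, j*n+b) = complex_of_real
         (if j = i then (if a = b then 1 else 0) - (1/2) * (P i $$ (a, b))
          else if j = pr i then (1/2) * (P i $$ (a, b)) else 0)" if b: "b < n" for b
      proof -
        have "j*n + b < (j+1)*n" using b by simp
        also have "\<dots> \<le> m*n" using j by (intro mult_right_mono) auto
        finally have "j*n+b < m*n" .
        moreover have "a mod n = a" "b mod n = b" using a b by auto
        ultimately show ?thesis using rlt ipr(1) unfolding Mc_def M_def cyc_block_mat_def pr_def
          by (simp add: dm[OF a] dm[OF b] Let_def)
      qed
      show "(\<Sum>b<n. Mc $$ (i*n+a, j*n+b) * x j b) = (if j = i then x i a - (1/2) * app n (P i) (x i) a else 0)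
                        + (if j = pr i then (1/2) * app n (P i) (x (pr i)) a else 0)"
      proof (cases "j = i")
        case True
        have "(\<Sum>b<n. Mc $$ (i*n+a, j*n+b) * x j b) =
              (\<Sum>b<n. (if a = b then x i b else 0) - (1/2) * (complex_of_real (P i $$ (a,b)) * x i b))"
        proof (rule sum.cong)
          fix b assume "b \<in> {..<n}" then have b: "b < n" by simp
          show "Mc $$ (i*n+a, j*n+b) * x j b = (if a = b then x i b else 0) - (1/2) * (complex_of_real (P i $$ (a,b)) * x i b)"
            unfolding ent[OF b] using True by (auto simp: algebra_simps)
        qed simp
        also have "\<dots> = x i a - (1/2) * app n (P i) (x i) a"
          using a by (simp add: sum_subtractf app_def sum_distrib_left)
        finally show ?thesis using True ipr by simp
      next
        case False
        show ?thesis
        proof (cases "j = pr i")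
          case True
          have "(\<Sum>b<n. Mc $$ (i*n+a, j*n+b) * x j b) =
              (\<Sum>b<n. (1/2) * (complex_of_real (P i $$ (a,b)) * x (pr i) b))"
          proof (rule sum.cong)
            fix b assume "b \<in> {..<n}" then have b: "b < n" by simp
            show "Mc $$ (i*n+a, j*n+b) * x j b = (1/2) * (complex_of_real (P i $$ (a,b)) * x (pr i) b)"
              unfolding ent[OF b] using True ipr by (auto simp: algebra_simps)
          qed simp
          also have "\<dots> = (1/2) * app n (P i) (x (pr i)) a"
            by (simp add: app_def sum_distrib_left)
          finally show ?thesis using True ipr by simp
        next
          case F2: False
          show ?thesis using False F2 by (simp add: ent)
        qed
      qed
    qed simp
    also have "\<dots> = x i a - (1/2) * app n (P i) (x i) a + (1/2) * app n (P i) (x (pr i)) a"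
      using i ipr by (simp add: sum.distrib)
    finally show ?thesis unfolding x_def by simp
  qed
  have i0: "r div n < m" "r mod n < n" using r npos
    by (auto simp: less_mult_imp_div_less)
  have "x (r div n) (r mod n) = v $ r" unfolding x_def by (simp add: mult.commute)
  then have nz: "x (r div n) (r mod n) \<noteq> 0" using r by simp
  have E': "\<And>i a. i < m \<Longrightarrow> a < n \<Longrightarrow>
       lam * x i a = x i a - (1/2) * app n (P i) (x i) a + (1/2) * app n (P i) (x ((i + m - 1) mod m)) a"
    using E unfolding pr_def .
  show ?thesis
    by (rule abstract_main[where x = x, OF assms(1) assms(2) E' i0 nz assms(4)])
qed

end
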